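(* Suppose (P1), (P2), (P3), (P4), (A1), (A2), (A3b), (A4b) hold (same $\alpha$). Then for every $\delta>0$, $$\mathbb{P}\big[\|\dot F(\theta_k)\|_2^2\le\delta \text{ for infinitely many } k\big]=1.$$
   Context: Setting: $X$ is a random variable taking values in a measurable space $\mathcal{X}$; $f:\mathbb{R}^p\times\mathcal{X}\to\mathbb{R}$ is such that $f(\cdot,x)$ is differentiable for every $x$, with gradient in the first argument denoted $\dot f(\theta,x)$ (measurable in $x$); $F(\theta)=\mathbb{E}[f(\theta,X)]$ is finite and differentiable with gradient $\dot F(\theta)$. SGD: $\theta_0\in\mathbb{R}^p$ is fixed (deterministic), $X_1,X_2,\dots$ are i.i.d. copies of $X$, $M_0,M_1,\dots$ are deterministic $p\times p$ matrices, and $\theta_{k+1}=\theta_k - M_k\dot f(\theta_k,X_{k+1})$ for $k\ge 0$. $\lambda_{\max}(\cdot),\lambda_{\min}(\cdot)$ denote the largest and smallest eigenvalues of a symmetric matrix. (P1) Every $M_k$ is symmetric positive definite. (P2) For some $\alpha\in(0,1]$, $S:=\sum_{k=1}^\infty \lambda_{\max}(M_k)^{1+\alpha}<\infty$. (P3) $\sum_{k=1}^\infty\lambda_{\min}(M_k)=\infty$. (P4) $\lim_{k\to\infty}\lambda_{\max}(M_k)^\alpha\kappa(M_k)=0$, where $\kappa(M)=\|M\|_2\|M^{-1}\|_2$. (A1) There is $F_{l.b.}\in\mathbb{R}$ with $F(\theta)\ge F_{l.b.}$ for all $\theta$. (A2) $\mathbb{E}[\dot f(\theta,X)]=\dot F(\theta)$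 for all $\theta$. (A3b) There are $C_1,C_2\ge0$, $C_3\ge1$ with $\mathbb{E}[\|\dot f(\theta,X)\|_2^2]\le C_1+C_2(F(\theta)-F_{l.b.})+C_3\|\dot F(\theta)\|_2^2$ for all $\theta$. (A4b) $\dot F$ is globally $\alpha$-Hölder continuous: there is $L>0$ with $\|\dot F(\varphi_1)-\dot F(\varphi_2)\|_2\le L\|\varphi_1-\varphi_2\|_2^\alpha$ for all $\varphi_1,\varphi_2\in\mathbb{R}^p$. *)

theory Defs
  imports "HOL-Analysis.Analysis" "HOL-Probability.Probability"
begin

definition real_eigenvalues :: "real^'n^'n \<Rightarrow> real set" where
  "real_eigenvalues A = {l. \<exists>v. v \<noteq> 0 \<and> A *v v = l *\<^sub>R v}"

definition lambda_max :: "real^'n^'n \<Rightarrow> real" where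
  "lambda_max A = Max (real_eigenvalues A)"

definition lambda_min :: "real^'n^'n \<Rightarrow> real" where
  "lambda_min A = Min (real_eigenvalues A)"

definition sym_pos_def_mat :: "real^'n^'n \<Rightarrow> bool" where
  "sym_pos_def_mat A \<longleftrightarrow> transpose A = A \<and> (\<forall>v. v \<noteq> 0 \<longrightarrow> v \<bullet> (A *v v) > 0)"

definition op_norm2 :: "real^'n^'n \<Rightarrow> real" where
  "op_norm2 A = onorm (\<lambda>x. A *v x)"

definition cond_num :: "real^'n^'n \<Rightarrow> real" where
  "cond_num A = op_norm2 A * op_norm2 (matrix_inv A)"

primrec sgd_iter ::
  "(real^'p) \<Rightarrow> (nat \<Rightarrow> real^'p^'p) \<Rightarrow> (real^'p \<Rightarrow> 'x \<Rightarrow> real^'p) \<Rightarrow> (nat \<Rightarrow> 'w \<Rightarrow> 'x)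
     \<Rightarrow> nat \<Rightarrow> 'w \<Rightarrow> real^'p" where
  "sgd_iter th0 Ms fd X 0 \<omega> = th0"
| "sgd_iter th0 Ms fd X (Suc k) \<omega> =
     sgd_iter th0 Ms fd X k \<omega> - Ms k *v fd (sgd_iter th0 Ms fd X k \<omega>) (X (Suc k) \<omega>)"

end

theory Submission
  imports Defs
begin

lemma sym_inner: fixes A :: "real^'n^'n" assumes "transpose A = A"
  shows "u \<bullet> (A *v w) = w \<bullet> (A *v u)"
proof -
  have "u \<bullet> (A *v w) = (u v* A) \<bullet> w" by (simp add: dot_lmul_matrix)
  also have "u v* A = transpose A *v u" by simp
  finally show ?thesis using assms by (simp add: inner_commute)
qed

lemma rayleigh_max:
  fixes A :: "real^'n^'n" assumes sym: "transpose A = A"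
  obtains u where "norm u = 1" "\<And>v. v \<bullet> (A *v v) \<le> (u \<bullet> (A *v u)) * (norm v)\<^sup>2"
    "A *v u = (u \<bullet> (A *v u)) *\<^sub>R u"
proof -
  let ?q = "\<lambda>v. v \<bullet> (A *v v)"
  have cont: "continuous_on (sphere 0 1) ?q"
    by (intro continuous_intros linear_continuous_on bounded_linear_intros) (auto simp: matrix_vector_mul_linear linear_conv_bounded_linear)
  have ne: "sphere (0::real^'n) 1 \<noteq> {}"
    by (simp add: sphere_def) (metis norm_Basis ex_in_conv nonempty_Basis dist_0_norm)
  obtain u where u: "u \<in> sphere 0 1" and umax: "\<And>y. y \<in> sphere 0 1 \<Longrightarrow> ?q y \<le> ?q u"
    using continuous_attains_sup[OF compact_sphere ne cont] by blast
  define m where "m = ?q u"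
  have nu: "norm u = 1" using u by simp
  have lin: "A *v (a *\<^sub>R x) = a *\<^sub>R (A *v x)" "A *v (x + y) = A *v x + A *v y" for a x y
    by (simp_all add: linear_cmul[OF matrix_vector_mul_linear] linear_add[OF matrix_vector_mul_linear])
  have all: "?q v \<le> m * (norm v)\<^sup>2" for v
  proof (cases "v = 0")
    case True then show ?thesis by (simp add: matrix_vector_mult_0_right)
  next
    case False
    let ?w = "(1/norm v) *\<^sub>R v"
    have ws: "?w \<in> sphere 0 1" using False by simp
    have a: "?q ?w \<le> m" using umax[OF ws] unfolding m_def .
    have b: "?q ?w = ?q v / (norm v)\<^sup>2" using lin by (simp add: power2_eq_square)
    have "?q v / (norm v)\<^sup>2 \<le> m" using a unfolding b .
    then show ?thesis using False by (simp add: divide_le_eq)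
  qed
  define w where "w = A *v u - m *\<^sub>R u"
  have uu: "u \<bullet> u = 1" using nu by (simp add: dot_square_norm)
  have uw: "u \<bullet> w = 0" unfolding w_def m_def using uu by (simp add: inner_diff_right)
  define s where "s = w \<bullet> w"
  have wAu: "w \<bullet> (A *v u) = s" unfolding s_def
    by (smt (verit, ccfv_threshold) inner_commute inner_diff_left inner_scaleR_left uw w_def)
  have s0: "s \<ge> 0" unfolding s_def by simp
  have key: "2 * t * s \<le> t\<^sup>2 * (m * s - ?q w)" for t
  proof -
    have "?q (u + t *\<^sub>R w) = m + 2 * t * s + t\<^sup>2 * ?q w"
      using sym_inner[OF sym, of u w] wAu unfolding m_def
      by (simp add: lin inner_add_left inner_add_right power2_eq_square algebra_simps)
    moreover have "(norm (u + t *\<^sub>R w))\<^sup>2 = 1 + t\<^sup>2 * s"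
      using uu uw unfolding s_def
      by (simp only: power2_norm_eq_inner inner_add_left inner_add_right inner_scaleR_left inner_scaleR_right) (simp add: inner_commute power2_eq_square)
    ultimately show ?thesis using all[of "u + t *\<^sub>R w"] by (simp add: algebra_simps)
  qed
  have "s = 0"
  proof (rule ccontr)
    assume "s \<noteq> 0" hence sp: "s > 0" using s0 by simp
    define c where "c = m * s - ?q w"
    define t where "t = s / (\<bar>c\<bar> + 1)"
    have tp: "t > 0" unfolding t_def using sp by simp
    have "2 * t * s \<le> t * (t * c)" using key[of t] unfolding c_def by (simp add: power2_eq_square)
    hence "2 * s \<le> t * c" using tp by simp
    moreover have "t * c < s"
    proof -
      have "t * c \<le> t * \<bar>c\<bar>" using tp by (simp add: mult_left_mono)
      also have "\<dots> < s" unfolding t_def using sp by (simp add: field_simps)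
      finally show ?thesis .
    qed
    ultimately show False using sp by simp
  qed
  hence "w = 0" unfolding s_def by simp
  hence "A *v u = m *\<^sub>R u" unfolding w_def by simp
  then show ?thesis using that nu all unfolding m_def by blast
qed

lemma mvneg: fixes A :: "real^'n^'n" shows "(-A) *v v = -(A *v v)"
  by (simp add: matrix_vector_mult_def vec_eq_iff sum_negf)

lemma transpose_neg': fixes A :: "real^'n^'n" shows "transpose (-A) = - transpose A"
  by (simp add: transpose_def vec_eq_iff)

lemma finite_eigs: fixes A :: "real^'n^'n" assumes sym: "transpose A = A"
  shows "finite (real_eigenvalues A)"
proof -
  define E where "E = real_eigenvalues A"
  have "\<forall>l\<in>E. \<exists>v. v \<noteq> 0 \<and> A *v v = l *\<^sub>R v" unfolding E_def real_eigenvalues_def by blast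
  then obtain ev where ev: "\<And>l. l \<in> E \<Longrightarrow> ev l \<noteq> 0 \<and> A *v ev l = l *\<^sub>R ev l" by metis
  have orth: "ev l \<bullet> ev l' = 0" if "l \<in> E" "l' \<in> E" "l \<noteq> l'" for l l'
  proof -
    have "l * (ev l' \<bullet> ev l) = ev l' \<bullet> (A *v ev l)" using ev[OF that(1)] by simp
    also have "\<dots> = ev l \<bullet> (A *v ev l')" by (rule sym_inner[OF sym])
    also have "\<dots> = l' * (ev l \<bullet> ev l')" using ev[OF that(2)] by simp
    finally have "(l - l') * (ev l \<bullet> ev l') = 0" by (simp add: inner_commute algebra_simps)
    then show ?thesis using that(3) by simp
  qed
  have inj: "inj_on ev E"
  proof (rule inj_onI, rule ccontr)
    fix l l' assume "l \<in> E" "l' \<in> E" "ev l = ev l'" "l \<noteq> l'"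
    then have "ev l \<bullet> ev l = 0" using orth by metis
    then show False using ev \<open>l \<in> E\<close> by simp
  qed
  have "pairwise orthogonal (ev ` E)"
    unfolding pairwise_def orthogonal_def using orth by (metis imageE)
  moreover have "0 \<notin> ev ` E" using ev by auto
  ultimately have "independent (ev ` E)" by (rule pairwise_orthogonal_independent)
  hence "finite (ev ` E)" by (rule independent_imp_finite)
  then show ?thesis using inj finite_imageD unfolding E_def by blast
qed

locale spd =
  fixes M :: "real^'n^'n"
  assumes spd: "sym_pos_def_mat M"
begin

lemma symM: "transpose M = M" using spd unfolding sym_pos_def_mat_def by blast
lemma posM: "v \<noteq> 0 \<Longrightarrow> v \<bullet> (M *v v) > 0" using spd unfolding sym_pos_def_mat_def by blast
lemma fin: "finite (real_eigenvalues M)" by (rule finite_eigs[OF symM])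

lemma eig_pos: assumes "l \<in> real_eigenvalues M" shows "l > 0"
proof -
  obtain v where v: "v \<noteq> 0" "M *v v = l *\<^sub>R v" using assms unfolding real_eigenvalues_def by blast
  have "0 < v \<bullet> (M *v v)" using posM[OF v(1)] .
  also have "\<dots> = l * (v \<bullet> v)" using v by simp
  moreover have "v \<bullet> v > 0" using v(1) by simp
  ultimately show ?thesis by (simp add: zero_less_mult_iff)
qed

lemma min_rayleigh: obtains u where "u \<noteq> 0" "\<And>v. (u \<bullet> (M *v u)) * (norm v)\<^sup>2 \<le> v \<bullet> (M *v v)"
    "M *v u = (u \<bullet> (M *v u)) *\<^sub>R u"
proof -
  have "transpose (-M) = -M" using symM by (simp add: transpose_neg')
  from rayleigh_max[OF this] obtain u where u: "norm u = 1"
    "\<And>v. v \<bullet> (-M *v v) \<le> (u \<bullet> (-M *v u)) * (norm v)\<^sup>2" "-M *v u = (u \<bullet> (-M *v u)) *\<^sub>R u" by blast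
  have "u \<noteq> 0" using u(1) by auto
  moreover have "(u \<bullet> (M *v u)) * (norm v)\<^sup>2 \<le> v \<bullet> (M *v v)" for v using u(2)[of v] by (simp add: mvneg)
  moreover have "M *v u = (u \<bullet> (M *v u)) *\<^sub>R u" using u(3) by (simp add: mvneg)
  ultimately show ?thesis using that by blast
qed

lemma eigs_ne: "real_eigenvalues M \<noteq> {}"
proof -
  obtain u where "u \<noteq> 0" "M *v u = (u \<bullet> (M *v u)) *\<^sub>R u" using min_rayleigh by blast
  then show ?thesis unfolding real_eigenvalues_def by blast
qed

lemma lmin_in: "lambda_min M \<in> real_eigenvalues M"
  unfolding lambda_min_def using fin eigs_ne by simp
lemma lmax_in: "lambda_max M \<in> real_eigenvalues M"
  unfolding lambda_max_def using fin eigs_ne by simp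
lemma lmin_pos: "lambda_min M > 0" using eig_pos lmin_in by blast
lemma lmax_pos: "lambda_max M > 0" using eig_pos lmax_in by blast
lemma lmin_le: "l \<in> real_eigenvalues M \<Longrightarrow> lambda_min M \<le> l"
  unfolding lambda_min_def using fin by simp
lemma lmax_ge: "l \<in> real_eigenvalues M \<Longrightarrow> l \<le> lambda_max M"
  unfolding lambda_max_def using fin by simp

lemma quad_lower: "lambda_min M * (norm v)\<^sup>2 \<le> v \<bullet> (M *v v)"
proof -
  obtain u where u: "u \<noteq> 0" "\<And>v. (u \<bullet> (M *v u)) * (norm v)\<^sup>2 \<le> v \<bullet> (M *v v)"
    "M *v u = (u \<bullet> (M *v u)) *\<^sub>R u" using min_rayleigh by blast
  have "u \<bullet> (M *v u) \<in> real_eigenvalues M" using u unfolding real_eigenvalues_def by blast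
  hence "lambda_min M \<le> u \<bullet> (M *v u)" by (rule lmin_le)
  hence "lambda_min M * (norm v)\<^sup>2 \<le> (u \<bullet> (M *v u)) * (norm v)\<^sup>2" by (simp add: mult_right_mono)
  also have "\<dots> \<le> v \<bullet> (M *v v)" by (rule u(2))
  finally show ?thesis .
qed

lemma norm_upper: "norm (M *v v) \<le> lambda_max M * norm v"
proof -
  have st: "transpose (M ** M) = M ** M" using symM by (simp add: matrix_transpose_mul)
  have qq: "x \<bullet> ((M ** M) *v x) = (norm (M *v x))\<^sup>2" for x
    using sym_inner[OF symM, of x "M *v x"] by (simp add: matrix_vector_mul_assoc[symmetric] power2_norm_eq_inner)
  from rayleigh_max[OF st] obtain u where u: "norm u = 1"
    "\<And>v. v \<bullet> ((M ** M) *v v) \<le> (u \<bullet> ((M ** M) *v u)) * (norm v)\<^sup>2"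
    "(M ** M) *v u = (u \<bullet> ((M ** M) *v u)) *\<^sub>R u" by blast
  define s where "s = norm (M *v u)"
  have s0: "s \<ge> 0" unfolding s_def by simp
  have MMu: "M *v (M *v u) = s\<^sup>2 *\<^sub>R u" using u(3) unfolding qq s_def by (simp add: matrix_vector_mul_assoc)
  define w where "w = M *v u + s *\<^sub>R u"
  have lin: "M *v (a *\<^sub>R x) = a *\<^sub>R (M *v x)" "M *v (x + y) = M *v x + M *v y" for a x y
    by (simp_all add: linear_cmul[OF matrix_vector_mul_linear] linear_add[OF matrix_vector_mul_linear])
  have Mw: "M *v w = s *\<^sub>R w" unfolding w_def using MMu by (simp add: lin power2_eq_square algebra_simps)
  have "w \<noteq> 0"
  proof
    assume "w = 0"
    hence "M *v u = - s *\<^sub>R u" unfolding w_def by (simp add: eq_neg_iff_add_eq_0)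
    hence "u \<bullet> (M *v u) = - s" using u(1) by (simp add: dot_square_norm)
    moreover have "u \<noteq> 0" using u(1) by auto
    hence "u \<bullet> (M *v u) > 0" using posM by blast
    ultimately show False using s0 by simp
  qed
  hence "s \<in> real_eigenvalues M" using Mw unfolding real_eigenvalues_def by blast
  hence sl: "s \<le> lambda_max M" by (rule lmax_ge)
  have "(norm (M *v v))\<^sup>2 \<le> s\<^sup>2 * (norm v)\<^sup>2" using u(2)[of v] unfolding qq s_def .
  also have "\<dots> \<le> (lambda_max M * norm v)\<^sup>2" using sl s0 by (simp add: power_mult_distrib mult_right_mono power_mono)
  finally show ?thesis using lmax_pos by (simp add: power2_le_iff_abs_le)
qed

lemma invM: "M ** matrix_inv M = mat 1"
proof -
  have "\<forall>x. M *v x = 0 \<longrightarrow> x = 0" using posM by (metis inner_zero_right less_irrefl)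
  then obtain B where "B ** M = mat 1" using matrix_left_invertible_ker by blast
  hence "invertible M" using invertible_left_inverse by blast
  then show ?thesis unfolding matrix_inv_def invertible_def by (rule someI_ex[where P="\<lambda>A'. M ** A' = mat 1 \<and> A' ** M = mat 1", THEN conjunct1])
qed

lemma cond_ge: "lambda_max M / lambda_min M \<le> cond_num M"
proof -
  have bl: "bounded_linear ((*v) A)" for A :: "real^'n^'n"
    by (simp add: linear_conv_bounded_linear)
  obtain v where v: "v \<noteq> 0" "M *v v = lambda_max M *\<^sub>R v" using lmax_in unfolding real_eigenvalues_def by blast
  have "lambda_max M * norm v = norm (M *v v)" using v lmax_pos by simp
  also have "\<dots> \<le> op_norm2 M * norm v" unfolding op_norm2_def by (rule onorm[OF bl])
  finally have a: "lambda_max M \<le> op_norm2 M" using v by simp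
  obtain w where w: "w \<noteq> 0" "M *v w = lambda_min M *\<^sub>R w" using lmin_in unfolding real_eigenvalues_def by blast
  have "M *v (matrix_inv M *v w) = w" by (simp add: matrix_vector_mul_assoc invM)
  also have "w = M *v ((1 / lambda_min M) *\<^sub>R w)" using w lmin_pos
    by (simp add: linear_cmul[OF matrix_vector_mul_linear])
  finally have "matrix_inv M *v w = (1 / lambda_min M) *\<^sub>R w"
    using posM by (metis (no_types, lifting) eq_iff_diff_eq_0 inner_zero_right less_irrefl linear_diff[OF matrix_vector_mul_linear])
  hence "(1 / lambda_min M) * norm w = norm (matrix_inv M *v w)" using lmin_pos by simp
  also have "\<dots> \<le> op_norm2 (matrix_inv M) * norm w" unfolding op_norm2_def by (rule onorm[OF bl])
  finally have "(1 / lambda_min M) * norm w \<le> op_norm2 (matrix_inv M) * norm w" .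
  moreover have "norm w > 0" using w by simp
  ultimately have b: "1 / lambda_min M \<le> op_norm2 (matrix_inv M)" by (rule mult_right_le_imp_le)
  have "lambda_max M / lambda_min M = lambda_max M * (1 / lambda_min M)" by simp
  also have "\<dots> \<le> op_norm2 M * op_norm2 (matrix_inv M)"
    using a b lmax_pos lmin_pos by (intro mult_mono) auto
  finally show ?thesis unfolding cond_num_def .
qed

end

lemma descent:
  fixes F :: "'a::real_inner \<Rightarrow> real" and G :: "'a \<Rightarrow> 'a"
  assumes der: "\<And>\<theta>. (F has_derivative (\<lambda>h. G \<theta> \<bullet> h)) (at \<theta>)"
    and hol: "\<And>a b. norm (G a - G b) \<le> L * norm (a - b) powr \<alpha>"
    and al: "\<alpha> > 0" and L: "L \<ge> 0"
  shows "F (\<theta> + d) \<le> F \<theta> + G \<theta> \<bullet> d + L * norm d powr (1 + \<alpha>)"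
proof -
  have D: "DERIV (\<lambda>t. F (\<theta> + t *\<^sub>R d)) t :> G (\<theta> + t *\<^sub>R d) \<bullet> d" for t
  proof -
    have h: "((\<lambda>t. \<theta> + t *\<^sub>R d) has_derivative (\<lambda>x. x *\<^sub>R d)) (at t)"
      by (auto intro!: derivative_eq_intros)
    have "((\<lambda>t. F (\<theta> + t *\<^sub>R d)) has_derivative (\<lambda>x. G (\<theta> + t *\<^sub>R d) \<bullet> (x *\<^sub>R d))) (at t)"
      by (rule has_derivative_compose[OF h der])
    moreover have "(\<lambda>x. G (\<theta> + t *\<^sub>R d) \<bullet> (x *\<^sub>R d)) = (*) (G (\<theta> + t *\<^sub>R d) \<bullet> d)"
      by (auto simp: fun_eq_iff)
    ultimately show ?thesis unfolding has_field_derivative_def by simp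
  qed
  obtain z where z: "0 < z" "z < 1" and eq: "F (\<theta> + 1 *\<^sub>R d) - F (\<theta> + 0 *\<^sub>R d) = (1 - 0) * (G (\<theta> + z *\<^sub>R d) \<bullet> d)"
    using MVT2[of 0 1 "\<lambda>t. F (\<theta> + t *\<^sub>R d)", OF _ D] by auto
  have "G (\<theta> + z *\<^sub>R d) \<bullet> d = G \<theta> \<bullet> d + (G (\<theta> + z *\<^sub>R d) - G \<theta>) \<bullet> d" by (simp add: inner_diff_left)
  also have "(G (\<theta> + z *\<^sub>R d) - G \<theta>) \<bullet> d \<le> norm (G (\<theta> + z *\<^sub>R d) - G \<theta>) * norm d" by (rule norm_cauchy_schwarz)
  also have "\<dots> \<le> (L * norm (z *\<^sub>R d) powr \<alpha>) * norm d"
    using hol[of "\<theta> + z *\<^sub>R d" \<theta>] by (intro mult_right_mono) auto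
  also have "\<dots> \<le> (L * norm d powr \<alpha>) * norm d"
    using z al L by (intro mult_right_mono mult_left_mono powr_mono2) (auto intro: mult_left_le_one_le)
  also have "\<dots> = L * norm d powr (1 + \<alpha>)"
    by (cases "d = 0") (auto simp: powr_add)
  finally show ?thesis using eq by simp
qed

lemma grad_bound:
  fixes F :: "'a::real_inner \<Rightarrow> real" and G :: "'a \<Rightarrow> 'a"
  assumes desc: "\<And>\<theta> d. F (\<theta> + d) \<le> F \<theta> + G \<theta> \<bullet> d + L * norm d powr (1 + \<alpha>)"
    and lb: "\<And>\<theta>. F \<theta> \<ge> Flb" and al: "\<alpha> > 0" "\<alpha> \<le> 1" and L: "L > 0"
  shows "(norm (G \<theta>))\<^sup>2 \<le> 1 + (2 / ((1 / (2 * L)) powr (1 / \<alpha>))) * (F \<theta> - Flb)"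
proof -
  define s where "s = (1 / (2 * L)) powr (1 / \<alpha>)"
  have sp: "s > 0" unfolding s_def using L by simp
  have sa: "s powr \<alpha> = 1 / (2 * L)" unfolding s_def using L al by (simp add: powr_powr)
  define g where "g = norm (G \<theta>)"
  have V0: "F \<theta> - Flb \<ge> 0" using lb[of \<theta>] by simp
  show ?thesis
  proof (cases "g \<ge> 1")
    case False
    hence "g\<^sup>2 \<le> 1" unfolding g_def by (simp add: abs_square_le_1)
    moreover have "0 \<le> (2 / s) * (F \<theta> - Flb)" using sp V0 by simp
    ultimately show ?thesis unfolding g_def s_def by linarith
  next
    case True
    have "Flb \<le> F (\<theta> + (- s) *\<^sub>R G \<theta>)" by (rule lb)
    also have "\<dots> \<le> F \<theta> + G \<theta> \<bullet> ((- s) *\<^sub>R G \<theta>) + L * norm ((- s) *\<^sub>R G \<theta>) powr (1 + \<alpha>)" by (rule desc)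
    also have "G \<theta> \<bullet> ((- s) *\<^sub>R G \<theta>) = - s * g\<^sup>2" unfolding g_def by (simp add: power2_norm_eq_inner)
    also have "norm ((- s) *\<^sub>R G \<theta>) powr (1 + \<alpha>) = s powr (1 + \<alpha>) * g powr (1 + \<alpha>)"
      unfolding g_def using sp by (simp add: powr_mult)
    also have "s powr (1 + \<alpha>) = s * (1 / (2 * L))" using sp by (simp add: powr_add sa)
    also have "g powr (1 + \<alpha>) \<le> g powr 2" using True al by (intro powr_mono) auto
    also have "g powr 2 = g\<^sup>2" using True by (simp add: powr_numeral)
    finally have "Flb \<le> F \<theta> - s * g\<^sup>2 + L * (s * (1 / (2 * L))) * g\<^sup>2"
      using L sp by (simp add: mult_left_mono)
    hence "s * g\<^sup>2 / 2 \<le> F \<theta> - Flb" using L by (simp add: field_simps)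
    hence "g\<^sup>2 \<le> (2 / s) * (F \<theta> - Flb)" using sp by (simp add: field_simps)
    then show ?thesis unfolding g_def s_def by linarith
  qed
qed

lemma carath:
  fixes f :: "real^'p \<Rightarrow> 'x \<Rightarrow> real"
  assumes meas: "\<And>\<theta>. f \<theta> \<in> borel_measurable P"
    and cont: "\<And>x. x \<in> space P \<Longrightarrow> continuous_on UNIV (\<lambda>\<theta>. f \<theta> x)"
  shows "(\<lambda>z. f (fst z) (snd z)) \<in> borel_measurable (borel \<Otimes>\<^sub>M P)"
proof (rule borel_measurable_LIMSEQ_metric)
  define q where "q n \<theta> = (\<chi> i. real_of_int \<lfloor>real (Suc n) * \<theta> $ i\<rfloor> / real (Suc n))" for n and \<theta> :: "real^'p"
  have qlim: "(\<lambda>n. q n \<theta>) \<longlonglongrightarrow> \<theta>" for \<theta>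
  proof (rule vec_tendstoI)
    fix i
    have lo: "\<theta> $ i - 1 / real (Suc n) \<le> q n \<theta> $ i" for n
    proof -
      have "real (Suc n) * \<theta> $ i - 1 \<le> real_of_int \<lfloor>real (Suc n) * \<theta> $ i\<rfloor>" by linarith
      hence "(real (Suc n) * \<theta> $ i - 1) / real (Suc n) \<le> real_of_int \<lfloor>real (Suc n) * \<theta> $ i\<rfloor> / real (Suc n)"
        by (intro divide_right_mono) auto
      moreover have "(real (Suc n) * \<theta> $ i - 1) / real (Suc n) = \<theta> $ i - 1 / real (Suc n)"
        by (simp add: field_simps del: of_nat_Suc)
      ultimately show ?thesis unfolding q_def by simp
    qed
    have hi: "q n \<theta> $ i \<le> \<theta> $ i" for n
    proof -
      have "real_of_int \<lfloor>real (Suc n) * \<theta> $ i\<rfloor> \<le> real (Suc n) * \<theta> $ i" by linarith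
      hence "real_of_int \<lfloor>real (Suc n) * \<theta> $ i\<rfloor> / real (Suc n) \<le> real (Suc n) * \<theta> $ i / real (Suc n)"
        by (intro divide_right_mono) auto
      then show ?thesis unfolding q_def by (simp del: of_nat_Suc)
    qed
    have "(\<lambda>n. \<theta> $ i - 1 / real (Suc n)) \<longlonglongrightarrow> \<theta> $ i - 0"
      by (intro tendsto_diff tendsto_const LIMSEQ_inverse_real_of_nat[unfolded inverse_eq_divide])
    then have l1: "(\<lambda>n. \<theta> $ i - 1 / real (Suc n)) \<longlonglongrightarrow> \<theta> $ i" by simp
    have e1: "\<forall>\<^sub>F n in sequentially. \<theta> $ i - 1 / real (Suc n) \<le> q n \<theta> $ i" using lo by simp
    have e2: "\<forall>\<^sub>F n in sequentially. q n \<theta> $ i \<le> \<theta> $ i" using hi by simp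
    show "(\<lambda>n. q n \<theta> $ i) \<longlonglongrightarrow> \<theta> $ i"
      by (rule tendsto_sandwich[OF e1 e2 l1 tendsto_const])
  qed
  show "(\<lambda>n. f (q n (fst z)) (snd z)) \<longlonglongrightarrow> f (fst z) (snd z)" if "z \<in> space (borel \<Otimes>\<^sub>M P)" for z
  proof -
    have "snd z \<in> space P" using that by (auto simp: space_pair_measure)
    then have "isCont (\<lambda>\<theta>. f \<theta> (snd z)) (fst z)" using cont continuous_on_eq_continuous_at by blast
    then show ?thesis using qlim by (rule isCont_tendsto_compose)
  qed
  fix n
  define k where "k z = (\<lambda>i. \<lfloor>real (Suc n) * (fst z) $ i\<rfloor>)" for z :: "(real^'p) \<times> 'x"
  define g where "g c z = f (\<chi> i. real_of_int (c i) / real (Suc n)) (snd z)" for c :: "'p \<Rightarrow> int" and z :: "(real^'p) \<times> 'x"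
  have eq: "(\<lambda>z. f (q n (fst z)) (snd z)) = (\<lambda>z. g (k z) z)" unfolding q_def g_def k_def by simp
  have cm[measurable]: "(\<lambda>z::(real^'p)\<times>'x. (fst z) $ i) \<in> borel_measurable (borel \<Otimes>\<^sub>M P)" for i :: 'p
  proof -
    have "(\<lambda>x::real^'p. x $ i) \<in> borel_measurable borel"
      by (intro borel_measurable_continuous_onI continuous_on_component continuous_on_id)
    then show ?thesis by (rule measurable_compose[OF measurable_fst])
  qed
  have km: "k \<in> measurable (borel \<Otimes>\<^sub>M P) (count_space UNIV)"
    unfolding measurable_count_space_eq2_countable
  proof safe
    fix a :: "'p \<Rightarrow> int"
    have "k -` {a} \<inter> space (borel \<Otimes>\<^sub>M P) = {z \<in> space (borel \<Otimes>\<^sub>M P). \<forall>i. \<lfloor>real (Suc n) * (fst z) $ i\<rfloor> = a i}"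
      unfolding k_def by (auto simp: fun_eq_iff)
    also have "\<dots> \<in> sets (borel \<Otimes>\<^sub>M P)" by measurable
    finally show "k -` {a} \<inter> space (borel \<Otimes>\<^sub>M P) \<in> sets (borel \<Otimes>\<^sub>M P)" .
  qed simp
  show "(\<lambda>z. f (q n (fst z)) (snd z)) \<in> borel_measurable (borel \<Otimes>\<^sub>M P)"
    unfolding eq
  proof (rule measurable_compose_countable'[OF _ km])
    fix c :: "'p \<Rightarrow> int"
    show "g c \<in> borel_measurable (borel \<Otimes>\<^sub>M P)" unfolding g_def
      using meas by measurable
  qed simp
qed

lemma rec_sum:
  fixes e b :: "nat \<Rightarrow> ennreal" and a :: "nat \<Rightarrow> real"
  assumes a0: "\<And>k. a k \<ge> 0" and sa: "summable a" and c: "c \<ge> 0" and fin: "e K < \<infinity>"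
    and rec: "\<And>k. k \<ge> K \<Longrightarrow> e (Suc k) + b k \<le> ennreal (1 + c * a k) * e k + ennreal (c * a k)"
  shows "(\<Sum>k. b (k + K)) < \<infinity>"
proof -
  define E0 where "E0 = enn2real (e K)"
  have eK: "e K = ennreal E0" "E0 \<ge> 0" unfolding E0_def using fin by (auto simp: less_top)
  define Ep where "Ep n = E0 + c * (\<Sum>i<n. a (K + i))" for n
  define Pp where "Pp n = (\<Prod>i<n. (1 + c * a (K + i)))" for n
  have Ep0: "Ep n \<ge> 0" for n unfolding Ep_def using eK(2) a0 c by (intro add_nonneg_nonneg mult_nonneg_nonneg sum_nonneg) auto
  have Pp1: "Pp n \<ge> 1" for n unfolding Pp_def using a0 c by (intro prod_ge_1) auto
  have inv: "e (K + n) + (\<Sum>i<n. b (K + i)) \<le> ennreal (Ep n * Pp n)" for n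
  proof (induction n)
    case 0 then show ?case using eK by (simp add: Ep_def Pp_def)
  next
    case (Suc n)
    define a' where "a' = a (K + n)"
    have a'0: "a' \<ge> 0" using a0 a'_def by simp
    define X where "X = e (K + n)"
    define Sb where "Sb = (\<Sum>i<n. b (K + i))"
    have "e (K + Suc n) + (\<Sum>i<Suc n. b (K + i)) = (e (Suc (K + n)) + b (K + n)) + Sb"
      by (simp add: Sb_def add_ac)
    also have "\<dots> \<le> (ennreal (1 + c * a') * X + ennreal (c * a')) + Sb"
      unfolding a'_def X_def by (intro add_right_mono rec) simp
    also have "Sb \<le> ennreal (1 + c * a') * Sb"
    proof -
      have "1 * Sb \<le> ennreal (1 + c * a') * Sb" using c a'0
        by (intro mult_right_mono) (auto simp: ennreal_1[symmetric] simp del: ennreal_1 intro!: ennreal_leI)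
      then show ?thesis by simp
    qed
    hence "(ennreal (1 + c * a') * X + ennreal (c * a')) + Sb \<le> (ennreal (1 + c * a') * X + ennreal (c * a')) + ennreal (1 + c * a') * Sb"
      by (rule add_left_mono)
    also have "\<dots> = ennreal (1 + c * a') * (X + Sb) + ennreal (c * a')"
      by (simp add: distrib_left add_ac)
    also have "\<dots> \<le> ennreal (1 + c * a') * ennreal (Ep n * Pp n) + ennreal (c * a')"
      using Suc.IH unfolding X_def Sb_def by (intro add_right_mono mult_left_mono) auto
    also have "\<dots> = ennreal ((1 + c * a') * (Ep n * Pp n) + c * a')"
    proof -
      have p: "0 \<le> Ep n * Pp n" using Ep0[of n] Pp1[of n] by simp
      have q: "0 \<le> 1 + c * a'" using c a'0 by simp
      have r: "0 \<le> c * a'" using c a'0 by simp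
      show ?thesis using p q r
        by (simp only: ennreal_mult[symmetric] ennreal_plus[symmetric] mult_nonneg_nonneg)
    qed
    also have "\<dots> \<le> ennreal (Ep (Suc n) * Pp (Suc n))"
    proof (rule ennreal_leI)
      have "Ep (Suc n) = Ep n + c * a'" unfolding Ep_def a'_def by (simp add: algebra_simps)
      moreover have "Pp (Suc n) = Pp n * (1 + c * a')" unfolding Pp_def a'_def by simp
      moreover have "c * a' \<le> c * a' * (Pp n * (1 + c * a'))"
      proof -
        have "1 * 1 \<le> Pp n * (1 + c * a')" using Pp1[of n] c a'0
          by (intro mult_mono) auto
        hence "1 \<le> Pp n * (1 + c * a')" by simp
        then have "c * a' * 1 \<le> c * a' * (Pp n * (1 + c * a'))" using c a'0
          by (intro mult_left_mono) auto
        then show ?thesis by simp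
      qed
      ultimately show "(1 + c * a') * (Ep n * Pp n) + c * a' \<le> Ep (Suc n) * Pp (Suc n)"
        by (simp add: algebra_simps)
    qed
    finally show ?case .
  qed
  define S where "S = (\<Sum>k. a (k + K))"
  have sK: "summable (\<lambda>k. a (k + K))" using sa by (simp add: summable_iff_shift)
  have EpB: "Ep n \<le> E0 + c * S" for n
  proof -
    have "(\<Sum>i<n. a (K + i)) \<le> S" unfolding S_def using sK a0
      by (subst add.commute) (rule sum_le_suminf, auto)
    then show ?thesis unfolding Ep_def using c by (simp add: mult_left_mono)
  qed
  have PpB: "Pp n \<le> exp (c * S)" for n
  proof -
    have "Pp n \<le> (\<Prod>i<n. exp (c * a (K + i)))" unfolding Pp_def using a0 c
      by (intro prod_mono) (auto simp: add.commute[of _ 1] intro!: exp_ge_add_one_self_aux)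
    also have "\<dots> = exp (c * (\<Sum>i<n. a (K + i)))" by (simp add: exp_sum sum_distrib_left)
    also have "\<dots> \<le> exp (c * S)"
    proof -
      have "(\<Sum>i<n. a (K + i)) \<le> S" unfolding S_def using sK a0
        by (subst add.commute) (rule sum_le_suminf, auto)
      then show ?thesis using c by (simp add: mult_left_mono)
    qed
    finally show ?thesis .
  qed
  have bnd: "(\<Sum>i<n. b (i + K)) \<le> ennreal ((E0 + c * S) * exp (c * S))" for n
  proof -
    have "(\<Sum>i<n. b (i + K)) \<le> e (K + n) + (\<Sum>i<n. b (K + i))" by (simp add: add.commute)
    also have "\<dots> \<le> ennreal (Ep n * Pp n)" by (rule inv)
    also have "\<dots> \<le> ennreal ((E0 + c * S) * exp (c * S))"
    proof -
      have "0 \<le> E0 + c * S" using Ep0[of n] EpB[of n] by linarith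
      moreover have "0 \<le> Pp n" using Pp1[of n] by linarith
      ultimately show ?thesis using EpB[of n] PpB[of n] by (intro ennreal_leI mult_mono) auto
    qed
    finally show ?thesis .
  qed
  have "(\<Sum>k. b (k + K)) \<le> ennreal ((E0 + c * S) * exp (c * S))"
    by (rule suminf_le_const[OF summableI bnd])
  then show ?thesis using le_less_trans by fastforce
qed

lemma dir_deriv:
  fixes g :: "'a::real_inner \<Rightarrow> real"
  assumes der: "(g has_derivative (\<lambda>h. D \<bullet> h)) (at \<theta>)"
  shows "(\<lambda>n. real (Suc n) * (g (\<theta> + (1 / real (Suc n)) *\<^sub>R b) - g \<theta>)) \<longlonglongrightarrow> D \<bullet> b"
proof -
  have h: "((\<lambda>t. \<theta> + t *\<^sub>R b) has_derivative (\<lambda>x. x *\<^sub>R b)) (at 0)"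
    by (auto intro!: derivative_eq_intros)
  have "((\<lambda>t. g (\<theta> + t *\<^sub>R b)) has_derivative (\<lambda>x. D \<bullet> (x *\<^sub>R b))) (at 0)"
  proof -
    have der': "(g has_derivative (\<lambda>h. D \<bullet> h)) (at (\<theta> + 0 *\<^sub>R b))" using der by simp
    show ?thesis by (rule has_derivative_compose[OF h der'])
  qed
  moreover have "(\<lambda>x. D \<bullet> (x *\<^sub>R b)) = (*) (D \<bullet> b)" by (auto simp: fun_eq_iff)
  ultimately have "DERIV (\<lambda>t. g (\<theta> + t *\<^sub>R b)) 0 :> D \<bullet> b" unfolding has_field_derivative_def by simp
  hence lim: "((\<lambda>h. (g (\<theta> + h *\<^sub>R b) - g \<theta>) / h) \<longlongrightarrow> D \<bullet> b) (at 0)"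
    unfolding DERIV_def by simp
  have sl: "filterlim (\<lambda>n. 1 / real (Suc n)) (at 0) sequentially"
  proof (rule filterlim_atI)
    show "(\<lambda>n. 1 / real (Suc n)) \<longlonglongrightarrow> 0" using LIMSEQ_inverse_real_of_nat by (simp add: inverse_eq_divide)
  qed auto
  have "(\<lambda>n. (g (\<theta> + (1 / real (Suc n)) *\<^sub>R b) - g \<theta>) / (1 / real (Suc n))) \<longlonglongrightarrow> D \<bullet> b"
    by (rule filterlim_compose[OF lim sl])
  then show ?thesis by (simp add: mult.commute)
qed


lemma freq_small:
  fixes l g :: "nat \<Rightarrow> real"
  assumes l0: "\<And>k. l k \<ge> 0" and div: "filterlim (\<lambda>n. \<Sum>k=1..n. l k) at_top at_top"
    and sm: "summable (\<lambda>k. l (k + K) / 2 * g (k + K))" and d: "\<delta> > 0"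
  shows "\<exists>\<^sub>\<infinity>k. g k \<le> \<delta>"
proof (rule ccontr)
  assume "\<not> (\<exists>\<^sub>\<infinity>k. g k \<le> \<delta>)"
  then have "\<forall>\<^sub>F k in sequentially. \<not> g k \<le> \<delta>" by (simp add: not_frequently cofinite_eq_sequentially)
  then obtain N where N: "\<And>k. k \<ge> N \<Longrightarrow> g k > \<delta>" unfolding eventually_sequentially by force
  have s1: "summable (\<lambda>k. (2 / \<delta>) * (l (k + K) / 2 * g (k + K)))" by (rule summable_mult[OF sm])
  have "summable (\<lambda>k. l (k + K))"
  proof (rule summable_comparison_test'[OF s1])
    fix k assume "k \<ge> N"
    then have gk: "g (k + K) > \<delta>" using N by simp
    have "l (k + K) * \<delta> \<le> l (k + K) * g (k + K)" using gk l0 by (intro mult_left_mono) auto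
    then have "l (k + K) \<le> (2 / \<delta>) * (l (k + K) / 2 * g (k + K))" using d by (simp add: field_simps)
    then show "norm (l (k + K)) \<le> (2 / \<delta>) * (l (k + K) / 2 * g (k + K))" using l0 by simp
  qed
  then have sl: "summable l" by (rule summable_iff_shift[THEN iffD1])
  have "\<forall>\<^sub>F n in sequentially. suminf l + 1 \<le> (\<Sum>k=1..n. l k)" using div unfolding filterlim_at_top by blast
  then obtain n where "suminf l + 1 \<le> (\<Sum>k=1..n. l k)" unfolding eventually_sequentially by blast
  moreover have "(\<Sum>k=1..n. l k) \<le> suminf l" by (rule sum_le_suminf[OF sl]) (auto simp: l0)
  ultimately show False by simp
qed

locale sgd = prob_space M
  for M :: "'w measure" +
  fixes P :: "'x measure"
    and X :: "nat \<Rightarrow> 'w \<Rightarrow> 'x"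
    and f :: "real^'p \<Rightarrow> 'x \<Rightarrow> real"
    and fdot :: "real^'p \<Rightarrow> 'x \<Rightarrow> real^'p"
    and Fdot :: "real^'p \<Rightarrow> real^'p"
    and Ms :: "nat \<Rightarrow> real^'p^'p"
    and th0 :: "real^'p"
    and \<alpha> Flb C1 C2 C3 L :: real
  assumes P_prob: "prob_space P"
    and X_meas: "\<And>i. X i \<in> measurable M P"
    and X_dist: "\<And>i. i \<ge> 1 \<Longrightarrow> distr M P (X i) = P"
    and X_indep: "prob_space.indep_vars M (\<lambda>_. P) X {1..}"
    and f_diff: "\<And>\<theta> x. x \<in> space P \<Longrightarrow> ((\<lambda>t. f t x) has_derivative (\<lambda>h. fdot \<theta> x \<bullet> h)) (at \<theta>)"
    and fdot_meas: "\<And>\<theta>. fdot \<theta> \<in> borel_measurable P"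
    and F_finite: "\<And>\<theta>. integrable P (f \<theta>)"
    and F_diff: "\<And>\<theta>. ((\<lambda>t. \<integral>x. f t x \<partial>P) has_derivative (\<lambda>h. Fdot \<theta> \<bullet> h)) (at \<theta>)"
    and alpha: "0 < \<alpha>" "\<alpha> \<le> 1"
    and P1: "\<And>k. sym_pos_def_mat (Ms k)"
    and P2: "summable (\<lambda>k. lambda_max (Ms (Suc k)) powr (1 + \<alpha>))"
    and P3: "filterlim (\<lambda>n. \<Sum>k=1..n. lambda_min (Ms k)) at_top at_top"
    and P4: "(\<lambda>k. lambda_max (Ms k) powr \<alpha> * cond_num (Ms k)) \<longlonglongrightarrow> 0"
    and A1: "\<And>\<theta>. (\<integral>x. f \<theta> x \<partial>P) \<ge> Flb"
    and A2: "\<And>\<theta>. has_bochner_integral P (fdot \<theta>) (Fdot \<theta>)"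
    and A3b_const: "C1 \<ge> 0" "C2 \<ge> 0" "C3 \<ge> 1"
    and A3b: "\<And>\<theta>. (\<integral>\<^sup>+ x. ennreal ((norm (fdot \<theta> x))\<^sup>2) \<partial>P)
                 \<le> ennreal (C1 + C2 * ((\<integral>x. f \<theta> x \<partial>P) - Flb) + C3 * (norm (Fdot \<theta>))\<^sup>2)"
    and A4b: "L > 0" "\<And>\<phi>1 \<phi>2. norm (Fdot \<phi>1 - Fdot \<phi>2) \<le> L * norm (\<phi>1 - \<phi>2) powr \<alpha>"
begin

definition F where "F \<theta> = (\<integral>x. f \<theta> x \<partial>P)"
definition V where "V \<theta> = F \<theta> - Flb"
abbreviation Th where "Th \<equiv> sgd_iter th0 Ms fdot X"

lemma Fder: "(F has_derivative (\<lambda>h. Fdot \<theta> \<bullet> h)) (at \<theta>)"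
  using F_diff unfolding F_def[abs_def] .

lemma F_cont: "continuous_on UNIV F"
  by (intro continuous_at_imp_continuous_on ballI has_derivative_continuous[OF Fder])

lemma V_cont: "continuous_on UNIV V"
  unfolding V_def[abs_def] by (intro continuous_intros F_cont)

lemma V_nonneg: "V \<theta> \<ge> 0" using A1 unfolding V_def F_def by simp

lemma G_cont: "continuous_on UNIV Fdot"
proof -
  have "isCont Fdot a" for a
  proof -
    have "((\<lambda>x. Fdot x - Fdot a) \<longlongrightarrow> 0) (at a)"
    proof (rule Lim_null_comparison)
      show "\<forall>\<^sub>F x in at a. norm (Fdot x - Fdot a) \<le> L * norm (x - a) powr \<alpha>" using A4b(2) by simp
      have "((\<lambda>x. norm (x - a)) \<longlongrightarrow> 0) (at a)"
        by (rule tendsto_norm_zero[OF LIM_zero[OF tendsto_ident_at]])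
      then have pw: "((\<lambda>x. norm (x - a) powr \<alpha>) \<longlongrightarrow> 0) (at a)"
        using alpha by (intro tendsto_zero_powrI) auto
      show "((\<lambda>x. L * norm (x - a) powr \<alpha>) \<longlongrightarrow> 0) (at a)"
        using tendsto_mult[OF tendsto_const pw, of L] by simp
    qed
    then show ?thesis unfolding isCont_def by (simp add: LIM_zero_iff)
  qed
  then show ?thesis by (simp add: continuous_at_imp_continuous_on)
qed

lemma desc: "F (\<theta> + d) \<le> F \<theta> + Fdot \<theta> \<bullet> d + L * norm d powr (1 + \<alpha>)"
  by (rule descent[OF Fder A4b(2) alpha(1)]) (use A4b in simp)

definition D where "D = 2 / ((1 / (2 * L)) powr (1 / \<alpha>))"

lemma D_pos: "D > 0" unfolding D_def using A4b by simp

lemma gb: "(norm (Fdot \<theta>))\<^sup>2 \<le> 1 + D * V \<theta>"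
  unfolding D_def V_def by (rule grad_bound[OF desc _ alpha A4b(1)]) (use A1 F_def in simp)

lemma f_meas: "f \<theta> \<in> borel_measurable P" using F_finite by blast

lemma fdot_joint: "(\<lambda>z. fdot (fst z) (snd z)) \<in> borel_measurable (borel \<Otimes>\<^sub>M P)"
proof -
  have J: "(\<lambda>z. f (fst z) (snd z)) \<in> borel_measurable (borel \<Otimes>\<^sub>M P)"
  proof (rule carath[OF f_meas])
    fix x assume "x \<in> space P"
    then show "continuous_on UNIV (\<lambda>\<theta>. f \<theta> x)"
      by (intro continuous_at_imp_continuous_on ballI has_derivative_continuous[OF f_diff])
  qed
  show ?thesis
  proof (rule borel_measurable_euclidean_space[THEN iffD2], intro ballI)
    fix b :: "real^'p" assume "b \<in> Basis"
    show "(\<lambda>z. fdot (fst z) (snd z) \<bullet> b) \<in> borel_measurable (borel \<Otimes>\<^sub>M P)"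
    proof (rule borel_measurable_LIMSEQ_metric)
      fix n
      have sh: "(\<lambda>z::(real^'p)\<times>'x. (fst z + (1 / real (Suc n)) *\<^sub>R b, snd z)) \<in> measurable (borel \<Otimes>\<^sub>M P) (borel \<Otimes>\<^sub>M P)"
        by (intro measurable_Pair borel_measurable_add measurable_fst measurable_snd borel_measurable_scaleR borel_measurable_const)
      have "(\<lambda>z. f (fst z + (1 / real (Suc n)) *\<^sub>R b) (snd z)) \<in> borel_measurable (borel \<Otimes>\<^sub>M P)"
        using measurable_compose[OF sh J] by simp
      then show "(\<lambda>z. real (Suc n) * (f (fst z + (1 / real (Suc n)) *\<^sub>R b) (snd z) - f (fst z) (snd z)))
          \<in> borel_measurable (borel \<Otimes>\<^sub>M P)"
        using J by (intro borel_measurable_times borel_measurable_diff borel_measurable_const)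
    next
      fix z :: "(real^'p)\<times>'x" assume "z \<in> space (borel \<Otimes>\<^sub>M P)"
      then have "snd z \<in> space P" by (auto simp: space_pair_measure)
      then show "(\<lambda>n. real (Suc n) * (f (fst z + (1 / real (Suc n)) *\<^sub>R b) (snd z) - f (fst z) (snd z)))
          \<longlonglongrightarrow> fdot (fst z) (snd z) \<bullet> b"
        by (intro dir_deriv f_diff)
    qed
  qed
qed

lemma mv_meas: "(\<lambda>v. A *v v) \<in> borel_measurable borel" for A :: "real^'p^'p"
  by (intro borel_measurable_continuous_onI linear_continuous_on) (simp add: linear_conv_bounded_linear)

lemma Th_meas: "(\<lambda>\<omega>. Th k \<omega>) \<in> borel_measurable M"
proof (induction k)
  case 0 then show ?case by simp
next
  case (Suc k)
  have pm: "(\<lambda>\<omega>. (Th k \<omega>, X (Suc k) \<omega>)) \<in> measurable M (borel \<Otimes>\<^sub>M P)"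
    by (rule measurable_Pair[OF Suc.IH X_meas])
  have "(\<lambda>\<omega>. fdot (Th k \<omega>) (X (Suc k) \<omega>)) \<in> borel_measurable M"
    using measurable_compose[OF pm fdot_joint] by simp
  then have m2: "(\<lambda>\<omega>. Ms k *v fdot (Th k \<omega>) (X (Suc k) \<omega>)) \<in> borel_measurable M"
    by (rule measurable_compose[OF _ mv_meas])
  have eq: "Th (Suc k) = (\<lambda>\<omega>. Th k \<omega> - Ms k *v fdot (Th k \<omega>) (X (Suc k) \<omega>))"
    by (simp add: fun_eq_iff)
  show ?case unfolding eq by (rule borel_measurable_diff[OF Suc.IH m2])
qed


lemma sgd_restrict:
  assumes "\<And>i. i \<in> {1..k} \<Longrightarrow> y i = X i \<omega>" and "j \<le> k"
  shows "sgd_iter th0 Ms fdot (\<lambda>i y. y i) j y = Th j \<omega>"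
  using assms(2)
proof (induction j)
  case 0 then show ?case by simp
next
  case (Suc j)
  then have "y (Suc j) = X (Suc j) \<omega>" using assms(1) by simp
  then show ?case using Suc by simp
qed

lemma Phi_meas:
  assumes "j \<le> k"
  shows "(\<lambda>y. sgd_iter th0 Ms fdot (\<lambda>i y. y i) j y) \<in> measurable (PiM {1..k} (\<lambda>_. P)) borel"
  using assms
proof (induction j)
  case 0 then show ?case by simp
next
  case (Suc j)
  let ?Phi = "\<lambda>y. sgd_iter th0 Ms fdot (\<lambda>i y. y i) j y"
  have IH: "?Phi \<in> measurable (PiM {1..k} (\<lambda>_. P)) borel" using Suc by simp
  have c: "(\<lambda>y. y (Suc j)) \<in> measurable (PiM {1..k} (\<lambda>_. P)) P"
    using measurable_component_singleton[of "Suc j" "{1..k}" "\<lambda>_. P"] Suc.prems by simp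
  have pm: "(\<lambda>y. (?Phi y, y (Suc j))) \<in> measurable (PiM {1..k} (\<lambda>_. P)) (borel \<Otimes>\<^sub>M P)"
    by (rule measurable_Pair[OF IH c])
  have "(\<lambda>y. fdot (?Phi y) (y (Suc j))) \<in> measurable (PiM {1..k} (\<lambda>_. P)) borel"
    using measurable_compose[OF pm fdot_joint] by simp
  then have m2: "(\<lambda>y. Ms j *v fdot (?Phi y) (y (Suc j))) \<in> measurable (PiM {1..k} (\<lambda>_. P)) borel"
    by (rule measurable_compose[OF _ mv_meas])
  have eq: "(\<lambda>y. sgd_iter th0 Ms fdot (\<lambda>i y. y i) (Suc j) y) = (\<lambda>y. ?Phi y - Ms j *v fdot (?Phi y) (y (Suc j)))"
    by (simp add: fun_eq_iff)
  show ?case unfolding eq by (rule borel_measurable_diff[OF IH m2])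
qed

lemma indep_nn:
  fixes U W :: "'w \<Rightarrow> 'b"
  assumes U: "U \<in> measurable M N1" and W: "W \<in> measurable M N2"
    and ind: "indep_var N1 U N2 W" and h: "h \<in> borel_measurable (N1 \<Otimes>\<^sub>M N2)"
  shows "(\<integral>\<^sup>+\<omega>. h (U \<omega>, W \<omega>) \<partial>M) = (\<integral>\<^sup>+\<omega>. (\<integral>\<^sup>+y. h (U \<omega>, y) \<partial>(distr M N2 W)) \<partial>M)"
proof -
  define DU where "DU = distr M N1 U"
  define DW where "DW = distr M N2 W"
  interpret DU: prob_space DU unfolding DU_def by (rule prob_space_distr[OF U])
  interpret DW: prob_space DW unfolding DW_def by (rule prob_space_distr[OF W])
  have eqd: "DU \<Otimes>\<^sub>M DW = distr M (N1 \<Otimes>\<^sub>M N2) (\<lambda>\<omega>. (U \<omega>, W \<omega>))"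
    using ind unfolding indep_var_distribution_eq DU_def DW_def by simp
  have sets_eq: "sets (DU \<Otimes>\<^sub>M DW) = sets (N1 \<Otimes>\<^sub>M N2)"
    unfolding DU_def DW_def by (intro sets_pair_measure_cong) auto
  have h': "h \<in> borel_measurable (DU \<Otimes>\<^sub>M DW)"
    using h measurable_cong_sets[OF sets_eq refl] by blast
  have pm: "(\<lambda>\<omega>. (U \<omega>, W \<omega>)) \<in> measurable M (N1 \<Otimes>\<^sub>M N2)" by (rule measurable_Pair[OF U W])
  have "(\<integral>\<^sup>+\<omega>. h (U \<omega>, W \<omega>) \<partial>M) = integral\<^sup>N (distr M (N1 \<Otimes>\<^sub>M N2) (\<lambda>\<omega>. (U \<omega>, W \<omega>))) h"
    by (rule nn_integral_distr[symmetric, OF pm]) (simp add: h)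
  also have "\<dots> = integral\<^sup>N (DU \<Otimes>\<^sub>M DW) h" unfolding eqd ..
  also have "\<dots> = (\<integral>\<^sup>+u. (\<integral>\<^sup>+y. h (u, y) \<partial>DW) \<partial>DU)" by (rule DW.nn_integral_fst[OF h', symmetric])
  also have "\<dots> = (\<integral>\<^sup>+\<omega>. (\<integral>\<^sup>+y. h (U \<omega>, y) \<partial>DW) \<partial>M)"
    unfolding DU_def by (rule nn_integral_distr[OF U]) (use DW.borel_measurable_nn_integral_fst[OF h'] in \<open>simp add: DU_def\<close>)
  finally show ?thesis unfolding DW_def .
qed

lemma indep_step:
  assumes g: "g \<in> borel_measurable (borel \<Otimes>\<^sub>M P)"
  shows "(\<integral>\<^sup>+\<omega>. g (Th k \<omega>, X (Suc k) \<omega>) \<partial>M) = (\<integral>\<^sup>+\<omega>. (\<integral>\<^sup>+x. g (Th k \<omega>, x) \<partial>P) \<partial>M)"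
proof -
  define N1 where "N1 = PiM {1..k} (\<lambda>_. P)"
  define N2 where "N2 = PiM {Suc k} (\<lambda>_. P)"
  define R1 where "R1 \<omega> = restrict (\<lambda>i. X i \<omega>) {1..k}" for \<omega>
  define R2 where "R2 \<omega> = restrict (\<lambda>i. X i \<omega>) {Suc k}" for \<omega>
  define Phi where "Phi y = sgd_iter th0 Ms fdot (\<lambda>i y. y i) k y" for y
  have ind: "indep_vars (\<lambda>_. P) X {1..}" using X_indep .
  have iv: "indep_var N1 R1 N2 R2"
    unfolding N1_def N2_def R1_def[abs_def] R2_def[abs_def] by (rule indep_var_restrict[OF ind]) auto
  have R1m: "R1 \<in> measurable M N1" using iv by (rule indep_var_rv1)
  have R2m: "R2 \<in> measurable M N2" using iv by (rule indep_var_rv2)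
  have Phim: "Phi \<in> measurable N1 borel" unfolding Phi_def N1_def by (rule Phi_meas) simp
  have c: "(\<lambda>y. y (Suc k)) \<in> measurable N2 P"
    unfolding N2_def using measurable_component_singleton[of "Suc k" "{Suc k}" "\<lambda>_. P"] by simp
  define h where "h z = g (Phi (fst z), snd z (Suc k))" for z
  have hm: "h \<in> borel_measurable (N1 \<Otimes>\<^sub>M N2)"
  proof -
    have "(\<lambda>z. (Phi (fst z), snd z (Suc k))) \<in> measurable (N1 \<Otimes>\<^sub>M N2) (borel \<Otimes>\<^sub>M P)"
      by (intro measurable_Pair measurable_compose[OF measurable_fst Phim] measurable_compose[OF measurable_snd c])
    from measurable_compose[OF this g] show ?thesis unfolding h_def by simp
  qed
  have gx: "(\<lambda>x. g (\<theta>, x)) \<in> borel_measurable P" for \<theta>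
  proof -
    have "(\<lambda>x. (\<theta>, x)) \<in> measurable P (borel \<Otimes>\<^sub>M P)"
      by (rule measurable_Pair[OF measurable_const measurable_ident_sets]) auto
    from measurable_compose[OF this g] show ?thesis by simp
  qed
  have phiR: "Phi (R1 \<omega>) = Th k \<omega>" for \<omega>
    unfolding Phi_def by (rule sgd_restrict) (auto simp: R1_def)
  have eqL: "g (Th k \<omega>, X (Suc k) \<omega>) = h (R1 \<omega>, R2 \<omega>)" for \<omega>
    by (simp add: h_def phiR R2_def)
  have inner: "(\<integral>\<^sup>+y. h (u, y) \<partial>(distr M N2 R2)) = (\<integral>\<^sup>+x. g (Phi u, x) \<partial>P)" for u
  proof -
    have m1: "(\<lambda>y. h (u, y)) \<in> borel_measurable N2"
      unfolding h_def using measurable_compose[OF c gx] by simp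
    have "(\<integral>\<^sup>+y. h (u, y) \<partial>(distr M N2 R2)) = (\<integral>\<^sup>+\<omega>. h (u, R2 \<omega>) \<partial>M)"
      by (rule nn_integral_distr[OF R2m]) (simp add: m1)
    also have "\<dots> = (\<integral>\<^sup>+\<omega>. g (Phi u, X (Suc k) \<omega>) \<partial>M)" unfolding h_def R2_def by simp
    also have "\<dots> = (\<integral>\<^sup>+x. g (Phi u, x) \<partial>(distr M P (X (Suc k))))"
      by (rule nn_integral_distr[OF X_meas, symmetric]) (simp add: gx)
    also have "\<dots> = (\<integral>\<^sup>+x. g (Phi u, x) \<partial>P)" using X_dist[of "Suc k"] by simp
    finally show ?thesis .
  qed
  have "(\<integral>\<^sup>+\<omega>. g (Th k \<omega>, X (Suc k) \<omega>) \<partial>M) = (\<integral>\<^sup>+\<omega>. h (R1 \<omega>, R2 \<omega>) \<partial>M)" unfolding eqL ..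
  also have "\<dots> = (\<integral>\<^sup>+\<omega>. (\<integral>\<^sup>+y. h (R1 \<omega>, y) \<partial>(distr M N2 R2)) \<partial>M)"
    by (rule indep_nn[OF R1m R2m iv hm])
  also have "\<dots> = (\<integral>\<^sup>+\<omega>. (\<integral>\<^sup>+x. g (Phi (R1 \<omega>), x) \<partial>P) \<partial>M)" unfolding inner ..
  also have "\<dots> = (\<integral>\<^sup>+\<omega>. (\<integral>\<^sup>+x. g (Th k \<omega>, x) \<partial>P) \<partial>M)"
    unfolding phiR ..
  finally show ?thesis .
qed

definition a where "a k = lambda_max (Ms k) powr (1 + \<alpha>)"

lemma a_nonneg: "a k \<ge> 0" unfolding a_def by simp

lemma pow_bound: "t \<ge> 0 \<Longrightarrow> t powr (1 + \<alpha>) \<le> 1 + t\<^sup>2"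
proof (cases "t \<le> 1")
  case True
  assume "t \<ge> 0"
  then have "t powr (1 + \<alpha>) \<le> 1" using True alpha by (intro powr_le1) auto
  then show ?thesis by (smt (verit) zero_le_power2)
next
  case False
  then have "t powr (1 + \<alpha>) \<le> t powr 2" using alpha by (intro powr_mono) auto
  also have "\<dots> = t\<^sup>2" using False by (simp add: powr_numeral)
  finally show ?thesis by simp
qed

lemma step_theta:
  fixes \<theta> :: "real^'p" and k :: nat
  defines "T \<equiv> V \<theta> - Fdot \<theta> \<bullet> (Ms k *v Fdot \<theta>) + L * a k * (1 + (C1 + C2 * V \<theta> + C3 * (norm (Fdot \<theta>))\<^sup>2))"
  shows "0 \<le> T \<and> (\<integral>\<^sup>+x. ennreal (V (\<theta> - Ms k *v fdot \<theta> x)) \<partial>P) \<le> ennreal T"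
proof -
  interpret P: prob_space P by (rule P_prob)
  interpret S: spd "Ms k" using P1 by unfold_locales
  let ?w = "fdot \<theta>" and ?G = "Fdot \<theta>" and ?Mk = "Ms k"
  define B3 where "B3 = C1 + C2 * V \<theta> + C3 * (norm ?G)\<^sup>2"
  have B3: "B3 \<ge> 0" unfolding B3_def using A3b_const V_nonneg by simp
  have iw: "integrable P ?w" using A2[of \<theta>] by (rule integrable.intros)
  have Iw: "(\<integral>x. ?w x \<partial>P) = ?G" using A2[of \<theta>] by (rule has_bochner_integral_integral_eq)
  have wm: "?w \<in> borel_measurable P" by (rule fdot_meas)
  have nn2: "(\<integral>\<^sup>+x. ennreal ((norm (?w x))\<^sup>2) \<partial>P) \<le> ennreal B3"
    using A3b[of \<theta>] unfolding B3_def V_def F_def .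
  have i2: "integrable P (\<lambda>x. (norm (?w x))\<^sup>2)"
  proof (rule integrableI_nonneg)
    show "(\<lambda>x. (norm (?w x))\<^sup>2) \<in> borel_measurable P" using wm by measurable
    show "(\<integral>\<^sup>+x. ennreal ((norm (?w x))\<^sup>2) \<partial>P) < \<infinity>" using nn2 le_less_trans by fastforce
  qed auto
  have I2: "(\<integral>x. (norm (?w x))\<^sup>2 \<partial>P) \<le> B3"
  proof -
    have "ennreal (\<integral>x. (norm (?w x))\<^sup>2 \<partial>P) = (\<integral>\<^sup>+x. ennreal ((norm (?w x))\<^sup>2) \<partial>P)"
      by (rule nn_integral_eq_integral[OF i2, symmetric]) auto
    also note nn2
    finally show ?thesis using B3 by simp
  qed
  define R where "R x = V \<theta> - (?G v* ?Mk) \<bullet> ?w x + L * a k * (1 + (norm (?w x))\<^sup>2)" for x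
  have pw: "V (\<theta> - ?Mk *v ?w x) \<le> R x" for x
  proof -
    have d: "F (\<theta> + - (?Mk *v ?w x)) \<le> F \<theta> + ?G \<bullet> (- (?Mk *v ?w x)) + L * norm (- (?Mk *v ?w x)) powr (1 + \<alpha>)"
      by (rule desc)
    have nb: "norm (- (?Mk *v ?w x)) powr (1 + \<alpha>) \<le> a k * (1 + (norm (?w x))\<^sup>2)"
    proof -
      have "norm (- (?Mk *v ?w x)) powr (1 + \<alpha>) \<le> (lambda_max ?Mk * norm (?w x)) powr (1 + \<alpha>)"
        using S.norm_upper[of "?w x"] alpha by (intro powr_mono2) auto
      also have "\<dots> = a k * norm (?w x) powr (1 + \<alpha>)"
        unfolding a_def using S.lmax_pos by (simp add: powr_mult)
      also have "\<dots> \<le> a k * (1 + (norm (?w x))\<^sup>2)"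
        using pow_bound[of "norm (?w x)"] a_nonneg by (intro mult_left_mono) auto
      finally show ?thesis .
    qed
    have ge: "?G \<bullet> (?Mk *v ?w x) = (?G v* ?Mk) \<bullet> ?w x" by (simp add: dot_lmul_matrix)
    have h1: "F (\<theta> - ?Mk *v ?w x) \<le> F \<theta> - (?G v* ?Mk) \<bullet> ?w x + L * norm (- (?Mk *v ?w x)) powr (1 + \<alpha>)"
      using d ge by simp
    have h2: "L * norm (- (?Mk *v ?w x)) powr (1 + \<alpha>) \<le> L * a k * (1 + (norm (?w x))\<^sup>2)"
      using mult_left_mono[OF nb, of L] A4b(1) by (simp add: mult.assoc)
    show ?thesis unfolding V_def R_def using h1 h2 by linarith
  qed
  have R0: "R x \<ge> 0" for x using pw[of x] V_nonneg[of "\<theta> - ?Mk *v ?w x"] by linarith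
  have iR: "integrable P R" unfolding R_def using iw i2 by (intro Bochner_Integration.integrable_add Bochner_Integration.integrable_diff integrable_mult_right) auto
  have IR: "(\<integral>x. R x \<partial>P) = V \<theta> - (?G v* ?Mk) \<bullet> ?G + L * a k * (1 + (\<integral>x. (norm (?w x))\<^sup>2 \<partial>P))"
    unfolding R_def using iw i2 Iw
    by (simp add: Bochner_Integration.integral_add Bochner_Integration.integral_diff integral_mult_right P.prob_space)
  have "(?G v* ?Mk) \<bullet> ?G = ?G \<bullet> (?Mk *v ?G)" by (simp add: dot_lmul_matrix)
  hence IRT: "(\<integral>x. R x \<partial>P) \<le> T" unfolding IR T_def B3_def[symmetric]
    using I2 a_nonneg[of k] A4b(1) by (simp add: mult_left_mono)
  have IR0: "(\<integral>x. R x \<partial>P) \<ge> 0" using R0 by (simp add: Bochner_Integration.integral_nonneg)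
  have "(\<integral>\<^sup>+x. ennreal (V (\<theta> - ?Mk *v ?w x)) \<partial>P) \<le> (\<integral>\<^sup>+x. ennreal (R x) \<partial>P)"
    using pw by (intro nn_integral_mono ennreal_leI) auto
  also have "\<dots> = ennreal (\<integral>x. R x \<partial>P)" by (rule nn_integral_eq_integral[OF iR]) (use R0 in auto)
  also have "\<dots> \<le> ennreal T" using IRT by (rule ennreal_leI)
  finally show ?thesis using IRT IR0 by simp
qed


definition c where "c = L * (1 + C1 + C2)"
definition Ak where "Ak k = 1 + L * a k * (C2 + C3 * D)"
definition Bk where "Bk k = L * a k * (1 + C1 + C3)"

lemma c_nonneg: "c \<ge> 0" unfolding c_def using A4b(1) A3b_const by simp
lemma Ak_nonneg: "Ak k \<ge> 0" unfolding Ak_def using A4b(1) A3b_const a_nonneg[of k] D_pos by simp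
lemma Bk_nonneg: "Bk k \<ge> 0" unfolding Bk_def using A4b(1) A3b_const a_nonneg[of k] by simp

lemma T_general:
  "V \<theta> - Fdot \<theta> \<bullet> (Ms k *v Fdot \<theta>) + L * a k * (1 + (C1 + C2 * V \<theta> + C3 * (norm (Fdot \<theta>))\<^sup>2))
    \<le> Ak k * V \<theta> + Bk k"
proof -
  interpret S: spd "Ms k" using P1 by unfold_locales
  define la where "la = L * a k"
  define g2 where "g2 = (norm (Fdot \<theta>))\<^sup>2"
  have la0: "la \<ge> 0" unfolding la_def using A4b(1) a_nonneg[of k] by simp
  have Q0: "Fdot \<theta> \<bullet> (Ms k *v Fdot \<theta>) \<ge> 0"
    using S.quad_lower[of "Fdot \<theta>"] S.lmin_pos by (smt (verit) mult_nonneg_nonneg zero_le_power2)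
  have k1: "la * C3 * g2 \<le> la * C3 * (1 + D * V \<theta>)"
    using gb[of \<theta>] la0 A3b_const unfolding g2_def by (intro mult_left_mono) auto
  have e1: "V \<theta> - Fdot \<theta> \<bullet> (Ms k *v Fdot \<theta>) + L * a k * (1 + (C1 + C2 * V \<theta> + C3 * (norm (Fdot \<theta>))\<^sup>2))
     = V \<theta> - Fdot \<theta> \<bullet> (Ms k *v Fdot \<theta>) + la + la * C1 + la * C2 * V \<theta> + la * C3 * g2"
    unfolding la_def g2_def by (simp add: algebra_simps)
  have e2: "Ak k * V \<theta> + Bk k = V \<theta> + la * C2 * V \<theta> + la * C3 * (1 + D * V \<theta>) + la + la * C1"
    unfolding Ak_def Bk_def la_def by (simp add: algebra_simps)
  show ?thesis unfolding e1 e2 using k1 Q0 by linarith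
qed

lemma T_refined:
  assumes Kc: "L * C3 * a k \<le> lambda_min (Ms k) / 2"
  shows "V \<theta> - Fdot \<theta> \<bullet> (Ms k *v Fdot \<theta>) + L * a k * (1 + (C1 + C2 * V \<theta> + C3 * (norm (Fdot \<theta>))\<^sup>2))
    + lambda_min (Ms k) / 2 * (norm (Fdot \<theta>))\<^sup>2 \<le> (1 + c * a k) * V \<theta> + c * a k"
proof -
  interpret S: spd "Ms k" using P1 by unfold_locales
  define la where "la = L * a k"
  define g2 where "g2 = (norm (Fdot \<theta>))\<^sup>2"
  define lm where "lm = lambda_min (Ms k)"
  have la0: "la \<ge> 0" unfolding la_def using A4b(1) a_nonneg[of k] by simp
  have g20: "g2 \<ge> 0" unfolding g2_def by simp
  have Q: "Fdot \<theta> \<bullet> (Ms k *v Fdot \<theta>) \<ge> lm * g2" unfolding lm_def g2_def by (rule S.quad_lower)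
  have k1: "la * C3 * g2 \<le> lm / 2 * g2" using Kc g20 unfolding la_def lm_def
    by (intro mult_right_mono) (auto simp: algebra_simps)
  have p1: "la * (1 + C1) * V \<theta> \<ge> 0" using la0 A3b_const V_nonneg by simp
  have p2: "la * C2 \<ge> 0" using la0 A3b_const by simp
  have e1: "V \<theta> - Fdot \<theta> \<bullet> (Ms k *v Fdot \<theta>) + L * a k * (1 + (C1 + C2 * V \<theta> + C3 * (norm (Fdot \<theta>))\<^sup>2))
    + lambda_min (Ms k) / 2 * (norm (Fdot \<theta>))\<^sup>2
     = V \<theta> - Fdot \<theta> \<bullet> (Ms k *v Fdot \<theta>) + la + la * C1 + la * C2 * V \<theta> + la * C3 * g2 + lm / 2 * g2"
    unfolding la_def g2_def lm_def by (simp add: algebra_simps)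
  have e2: "(1 + c * a k) * V \<theta> + c * a k = V \<theta> + la * (1 + C1) * V \<theta> + la * C2 * V \<theta> + la + la * C1 + la * C2"
    unfolding c_def la_def by (simp add: algebra_simps)
  show ?thesis unfolding e1 e2 using k1 Q p1 p2 by linarith
qed

definition H where "H k \<theta> = (\<integral>\<^sup>+x. ennreal (V (\<theta> - Ms k *v fdot \<theta> x)) \<partial>P)"

lemma V_meas: "V \<in> borel_measurable borel" by (rule borel_measurable_continuous_onI[OF V_cont])

lemma gk_meas: "(\<lambda>z. ennreal (V (fst z - Ms k *v fdot (fst z) (snd z)))) \<in> borel_measurable (borel \<Otimes>\<^sub>M P)"
proof -
  have "(\<lambda>z. Ms k *v fdot (fst z) (snd z)) \<in> borel_measurable (borel \<Otimes>\<^sub>M P)"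
    by (rule measurable_compose[OF fdot_joint mv_meas])
  then have "(\<lambda>z::(real^'p)\<times>'x. fst z - Ms k *v fdot (fst z) (snd z)) \<in> borel_measurable (borel \<Otimes>\<^sub>M P)"
    by (intro borel_measurable_diff measurable_fst'' measurable_ident_sets) auto
  from measurable_compose[OF this V_meas] have "(\<lambda>z. V (fst z - Ms k *v fdot (fst z) (snd z))) \<in> borel_measurable (borel \<Otimes>\<^sub>M P)" .
  from measurable_compose[OF this measurable_ennreal] show ?thesis .
qed

lemma H_meas: "H k \<in> borel_measurable borel"
proof -
  interpret P: prob_space P by (rule P_prob)
  show ?thesis unfolding H_def[abs_def] using P.borel_measurable_nn_integral_fst[OF gk_meas[of k]] by simp
qed

definition e where "e k = (\<integral>\<^sup>+\<omega>. ennreal (V (Th k \<omega>)) \<partial>M)"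
definition b where "b k = (\<integral>\<^sup>+\<omega>. ennreal (lambda_min (Ms k) / 2 * (norm (Fdot (Th k \<omega>)))\<^sup>2) \<partial>M)"

lemma VTh_meas: "(\<lambda>\<omega>. ennreal (V (Th k \<omega>))) \<in> borel_measurable M"
  using measurable_compose[OF measurable_compose[OF Th_meas V_meas] measurable_ennreal] by simp

lemma G_meas: "Fdot \<in> borel_measurable borel" by (rule borel_measurable_continuous_onI[OF G_cont])

lemma GTh_meas: "(\<lambda>\<omega>. ennreal (lambda_min (Ms k) / 2 * (norm (Fdot (Th k \<omega>)))\<^sup>2)) \<in> borel_measurable M"
proof -
  have "(\<lambda>\<omega>. Fdot (Th k \<omega>)) \<in> borel_measurable M" by (rule measurable_compose[OF Th_meas G_meas])
  then have "(\<lambda>\<omega>. lambda_min (Ms k) / 2 * (norm (Fdot (Th k \<omega>)))\<^sup>2) \<in> borel_measurable M" by measurable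
  from measurable_compose[OF this measurable_ennreal] show ?thesis .
qed

lemma HTh_meas: "(\<lambda>\<omega>. H k (Th k \<omega>)) \<in> borel_measurable M"
  by (rule measurable_compose[OF Th_meas H_meas])

lemma e_step: "e (Suc k) = (\<integral>\<^sup>+\<omega>. H k (Th k \<omega>) \<partial>M)"
proof -
  have "e (Suc k) = (\<integral>\<^sup>+\<omega>. (\<lambda>z. ennreal (V (fst z - Ms k *v fdot (fst z) (snd z)))) (Th k \<omega>, X (Suc k) \<omega>) \<partial>M)"
    unfolding e_def by simp
  also have "\<dots> = (\<integral>\<^sup>+\<omega>. (\<integral>\<^sup>+x. (\<lambda>z. ennreal (V (fst z - Ms k *v fdot (fst z) (snd z)))) (Th k \<omega>, x) \<partial>P) \<partial>M)"
    by (rule indep_step[OF gk_meas])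
  finally show ?thesis unfolding H_def by simp
qed

lemma lin_int: assumes "x0 \<ge> 0" "y0 \<ge> 0"
  shows "(\<integral>\<^sup>+\<omega>. ennreal (x0 * V (Th k \<omega>) + y0) \<partial>M) = ennreal x0 * e k + ennreal y0"
proof -
  have "(\<integral>\<^sup>+\<omega>. ennreal (x0 * V (Th k \<omega>) + y0) \<partial>M) = (\<integral>\<^sup>+\<omega>. ennreal x0 * ennreal (V (Th k \<omega>)) + ennreal y0 \<partial>M)"
    using assms V_nonneg by (intro nn_integral_cong) (simp add: ennreal_mult)
  also have "\<dots> = (\<integral>\<^sup>+\<omega>. ennreal x0 * ennreal (V (Th k \<omega>)) \<partial>M) + (\<integral>\<^sup>+\<omega>. ennreal y0 \<partial>M)"
    using VTh_meas by (intro nn_integral_add) auto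
  also have "\<dots> = ennreal x0 * e k + ennreal y0"
    unfolding e_def using VTh_meas by (simp add: nn_integral_cmult emeasure_space_1)
  finally show ?thesis .
qed

lemma rec_gen: "e (Suc k) \<le> ennreal (Ak k) * e k + ennreal (Bk k)"
proof -
  have "e (Suc k) \<le> (\<integral>\<^sup>+\<omega>. ennreal (Ak k * V (Th k \<omega>) + Bk k) \<partial>M)"
    unfolding e_step H_def
  proof (rule nn_integral_mono)
    fix \<omega>
    have "(\<integral>\<^sup>+x. ennreal (V (Th k \<omega> - Ms k *v fdot (Th k \<omega>) x)) \<partial>P) \<le>
      ennreal (V (Th k \<omega>) - Fdot (Th k \<omega>) \<bullet> (Ms k *v Fdot (Th k \<omega>)) + L * a k * (1 + (C1 + C2 * V (Th k \<omega>) + C3 * (norm (Fdot (Th k \<omega>)))\<^sup>2)))"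
      using step_theta by blast
    also have "\<dots> \<le> ennreal (Ak k * V (Th k \<omega>) + Bk k)" by (rule ennreal_leI[OF T_general])
    finally show "(\<integral>\<^sup>+x. ennreal (V (Th k \<omega> - Ms k *v fdot (Th k \<omega>) x)) \<partial>P) \<le> ennreal (Ak k * V (Th k \<omega>) + Bk k)" .
  qed
  also have "\<dots> = ennreal (Ak k) * e k + ennreal (Bk k)" by (rule lin_int[OF Ak_nonneg Bk_nonneg])
  finally show ?thesis .
qed

lemma e_fin: "e k < \<infinity>"
proof (induction k)
  case 0
  have "e 0 = ennreal (V th0)" unfolding e_def by (simp add: emeasure_space_1)
  then show ?case by simp
next
  case (Suc k)
  have a1: "ennreal (Ak k) * e k < \<infinity>" using Suc.IH by (simp add: ennreal_mult_less_top)
  have "ennreal (Ak k) * e k + ennreal (Bk k) < \<infinity>" using a1 by simp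
  then show ?case using rec_gen[of k] le_less_trans by blast
qed

lemma rec_ref:
  assumes Kc: "L * C3 * a k \<le> lambda_min (Ms k) / 2"
  shows "e (Suc k) + b k \<le> ennreal (1 + c * a k) * e k + ennreal (c * a k)"
proof -
  have "e (Suc k) + b k = (\<integral>\<^sup>+\<omega>. H k (Th k \<omega>) + ennreal (lambda_min (Ms k) / 2 * (norm (Fdot (Th k \<omega>)))\<^sup>2) \<partial>M)"
    unfolding e_step b_def by (rule nn_integral_add[symmetric, OF HTh_meas GTh_meas])
  also have "\<dots> \<le> (\<integral>\<^sup>+\<omega>. ennreal ((1 + c * a k) * V (Th k \<omega>) + c * a k) \<partial>M)"
  proof (rule nn_integral_mono)
    fix \<omega>
    define \<theta> where "\<theta> = Th k \<omega>"
    define T where "T = V \<theta> - Fdot \<theta> \<bullet> (Ms k *v Fdot \<theta>) + L * a k * (1 + (C1 + C2 * V \<theta> + C3 * (norm (Fdot \<theta>))\<^sup>2))"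
    have st: "0 \<le> T" "H k \<theta> \<le> ennreal T" using step_theta[of \<theta> k] unfolding T_def H_def by auto
    have q0: "0 \<le> lambda_min (Ms k) / 2 * (norm (Fdot \<theta>))\<^sup>2"
    proof -
      interpret S: spd "Ms k" using P1 by unfold_locales
      show ?thesis using S.lmin_pos by simp
    qed
    have "H k \<theta> + ennreal (lambda_min (Ms k) / 2 * (norm (Fdot \<theta>))\<^sup>2) \<le> ennreal T + ennreal (lambda_min (Ms k) / 2 * (norm (Fdot \<theta>))\<^sup>2)"
      using st(2) by (rule add_right_mono)
    also have "\<dots> = ennreal (T + lambda_min (Ms k) / 2 * (norm (Fdot \<theta>))\<^sup>2)" using st(1) q0 by simp
    also have "\<dots> \<le> ennreal ((1 + c * a k) * V \<theta> + c * a k)"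
      by (rule ennreal_leI) (use T_refined[OF Kc, of \<theta>] in \<open>simp add: T_def\<close>)
    finally show "H k (Th k \<omega>) + ennreal (lambda_min (Ms k) / 2 * (norm (Fdot (Th k \<omega>)))\<^sup>2) \<le> ennreal ((1 + c * a k) * V (Th k \<omega>) + c * a k)"
      unfolding \<theta>_def .
  qed
  also have "\<dots> = ennreal (1 + c * a k) * e k + ennreal (c * a k)"
    using c_nonneg a_nonneg[of k] by (intro lin_int) auto
  finally show ?thesis .
qed

lemma Kex: "\<exists>K. \<forall>k\<ge>K. L * C3 * a k \<le> lambda_min (Ms k) / 2"
proof -
  have pos: "1 / (2 * L * C3) > 0" using A4b(1) A3b_const by simp
  have "\<forall>\<^sub>F k in sequentially. lambda_max (Ms k) powr \<alpha> * cond_num (Ms k) < 1 / (2 * L * C3)"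
    by (rule order_tendstoD(2)[OF P4 pos])
  then obtain K where K: "\<And>k. k \<ge> K \<Longrightarrow> lambda_max (Ms k) powr \<alpha> * cond_num (Ms k) < 1 / (2 * L * C3)"
    unfolding eventually_sequentially by blast
  have "L * C3 * a k \<le> lambda_min (Ms k) / 2" if "k \<ge> K" for k
  proof -
    interpret S: spd "Ms k" using P1 by unfold_locales
    let ?lM = "lambda_max (Ms k)" and ?lm = "lambda_min (Ms k)" and ?k = "cond_num (Ms k)"
    have "?lM / ?lm \<le> ?k" by (rule S.cond_ge)
    then have lMk: "?lM \<le> ?k * ?lm" using S.lmin_pos by (simp add: divide_le_eq)
    have "a k = ?lM powr \<alpha> * ?lM" unfolding a_def using S.lmax_pos by (simp add: powr_add)
    also have "\<dots> \<le> ?lM powr \<alpha> * (?k * ?lm)" using lMk by (intro mult_left_mono) auto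
    also have "\<dots> = (?lM powr \<alpha> * ?k) * ?lm" by simp
    also have "\<dots> \<le> (1 / (2 * L * C3)) * ?lm" using K[OF that] S.lmin_pos by (intro mult_right_mono) auto
    finally have "a k \<le> (1 / (2 * L * C3)) * ?lm" .
    then have "L * C3 * a k \<le> L * C3 * ((1 / (2 * L * C3)) * ?lm)"
      using A4b(1) A3b_const by (intro mult_left_mono) auto
    also have "\<dots> = ?lm / 2" using A4b(1) A3b_const by (simp add: field_simps)
    finally show ?thesis .
  qed
  then show ?thesis by blast
qed

lemma a_summable: "summable a"
  using summable_Suc_iff[of "\<lambda>k. lambda_max (Ms k) powr (1 + \<alpha>)"] P2 unfolding a_def[abs_def] by simp

lemma main:
  assumes d: "\<delta> > 0"
  shows "AE \<omega> in M. (\<exists>\<^sub>\<infinity>k. (norm (Fdot (Th k \<omega>)))\<^sup>2 \<le> \<delta>)"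
proof -
  obtain K where K: "\<And>k. k \<ge> K \<Longrightarrow> L * C3 * a k \<le> lambda_min (Ms k) / 2" using Kex by blast
  have fin: "(\<Sum>k. b (k + K)) < \<infinity>"
    by (rule rec_sum[OF a_nonneg a_summable c_nonneg e_fin rec_ref[OF K]])
  define ff where "ff k \<omega> = ennreal (lambda_min (Ms (k + K)) / 2 * (norm (Fdot (Th (k + K) \<omega>)))\<^sup>2)" for k \<omega>
  have ffm: "ff k \<in> borel_measurable M" for k unfolding ff_def using GTh_meas by simp
  have "(\<integral>\<^sup>+\<omega>. (\<Sum>k. ff k \<omega>) \<partial>M) = (\<Sum>k. integral\<^sup>N M (ff k))"
    by (rule nn_integral_suminf[OF ffm])
  also have "\<dots> = (\<Sum>k. b (k + K))" unfolding ff_def b_def ..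
  finally have "(\<integral>\<^sup>+\<omega>. (\<Sum>k. ff k \<omega>) \<partial>M) \<noteq> \<infinity>" using fin by simp
  then have ae: "AE \<omega> in M. (\<Sum>k. ff k \<omega>) \<noteq> \<infinity>"
    by (intro nn_integral_PInf_AE borel_measurable_suminf_order ffm)
  show ?thesis
  proof (rule eventually_mono[OF ae])
    fix \<omega> assume fin\<omega>: "(\<Sum>k. ff k \<omega>) \<noteq> \<infinity>"
    have l0: "lambda_min (Ms k) \<ge> 0" for k
    proof -
      interpret S: spd "Ms k" using P1 by unfold_locales
      show ?thesis using S.lmin_pos by simp
    qed
    have "summable (\<lambda>k. lambda_min (Ms (k + K)) / 2 * (norm (Fdot (Th (k + K) \<omega>)))\<^sup>2)"
      by (rule summable_suminf_not_top) (use l0 fin\<omega> in \<open>auto simp: ff_def\<close>)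
    then show "\<exists>\<^sub>\<infinity>k. (norm (Fdot (Th k \<omega>)))\<^sup>2 \<le> \<delta>"
      by (rule freq_small[where l = "\<lambda>k. lambda_min (Ms k)", OF l0 P3 _ d])
  qed
qed

end

theorem mainTheorem14:
  fixes M :: "'w measure" and P :: "'x measure"
    and X :: "nat \<Rightarrow> 'w \<Rightarrow> 'x"
    and f :: "real^'p \<Rightarrow> 'x \<Rightarrow> real"
    and fdot :: "real^'p \<Rightarrow> 'x \<Rightarrow> real^'p"
    and Fdot :: "real^'p \<Rightarrow> real^'p"
    and Ms :: "nat \<Rightarrow> real^'p^'p"
    and th0 :: "real^'p"
    and \<alpha> Flb C1 C2 C3 L \<delta> :: real
  assumes prob: "prob_space M"
    and P_prob: "prob_space P"
    and X_meas: "\<And>i. X i \<in> measurable M P"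
    and X_dist: "\<And>i. i \<ge> 1 \<Longrightarrow> distr M P (X i) = P"
    and X_indep: "prob_space.indep_vars M (\<lambda>_. P) X {1..}"
    and f_diff: "\<And>\<theta> x. x \<in> space P \<Longrightarrow> ((\<lambda>t. f t x) has_derivative (\<lambda>h. fdot \<theta> x \<bullet> h)) (at \<theta>)"
    and fdot_meas: "\<And>\<theta>. fdot \<theta> \<in> borel_measurable P"
    and F_finite: "\<And>\<theta>. integrable P (f \<theta>)"
    and F_diff: "\<And>\<theta>. ((\<lambda>t. \<integral>x. f t x \<partial>P) has_derivative (\<lambda>h. Fdot \<theta> \<bullet> h)) (at \<theta>)"
    and alpha: "0 < \<alpha>" "\<alpha> \<le> 1"
    and P1: "\<And>k. sym_pos_def_mat (Ms k)"
    and P2: "summable (\<lambda>k. lambda_max (Ms (Suc k)) powr (1 + \<alpha>))"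
    and P3: "filterlim (\<lambda>n. \<Sum>k=1..n. lambda_min (Ms k)) at_top at_top"
    and P4: "(\<lambda>k. lambda_max (Ms k) powr \<alpha> * cond_num (Ms k)) \<longlonglongrightarrow> 0"
    and A1: "\<And>\<theta>. (\<integral>x. f \<theta> x \<partial>P) \<ge> Flb"
    and A2: "\<And>\<theta>. has_bochner_integral P (fdot \<theta>) (Fdot \<theta>)"
    and A3b_const: "C1 \<ge> 0" "C2 \<ge> 0" "C3 \<ge> 1"
    and A3b: "\<And>\<theta>. (\<integral>\<^sup>+ x. ennreal ((norm (fdot \<theta> x))\<^sup>2) \<partial>P)
                 \<le> ennreal (C1 + C2 * ((\<integral>x. f \<theta> x \<partial>P) - Flb) + C3 * (norm (Fdot \<theta>))\<^sup>2)"
    and A4b: "L > 0" "\<And>\<phi>1 \<phi>2. norm (Fdot \<phi>1 - Fdot \<phi>2) \<le> L * norm (\<phi>1 - \<phi>2) powr \<alpha>"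
    and delta: "\<delta> > 0"
  shows "AE \<omega> in M. (\<exists>\<^sub>\<infinity>k. (norm (Fdot (sgd_iter th0 Ms fdot X k \<omega>)))\<^sup>2 \<le> \<delta>)"
proof -
  interpret sgd M P X f fdot Fdot Ms th0 \<alpha> Flb C1 C2 C3 L
    by (rule sgd.intro[OF prob], rule sgd_axioms.intro) (fact assms)+
  show ?thesis by (rule main[OF delta])
qed

end
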